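(* Let $M$ be a finite matroid and let $d$ be the size of its largest circuit. Then $\mathrm{bd}(M)\ge\log_2 d$.
   Context: For a rooted tree $T$, $\|T\|$ is its number of edges and its depth is the number of edges of a longest root-to-leaf path. A depth-decomposition of a finite matroid $M$ (rank function $r$) is a pair $(T,f)$ with $T$ a rooted tree and $f:M\to V(T)$ such that (1) $r(M)=\|T\|$ and (2) $r(X)\le\|T^*(X)\|$ for every $X\subseteq M$, where $T^*(X)$ is the union of the paths from the root to all vertices of $f(X)$. The branch-depth $\mathrm{bd}(M)$ is the minimum depth of $T$ over all depth-decompositions $(T,f)$ of $M$. *)

theory Defs
  imports Complex_Main
begin

definition matroid :: "'a set \<Rightarrow> ('a set \<Rightarrow> bool) \<Rightarrow> bool" where
  "matroid E indep \<longleftrightarrow>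
     finite E \<and>
     (\<forall>X. indep X \<longrightarrow> X \<subseteq> E) \<and>
     indep {} \<and>
     (\<forall>X Y. indep X \<and> Y \<subseteq> X \<longrightarrow> indep Y) \<and>
     (\<forall>X Y. indep X \<and> indep Y \<and> card X < card Y \<longrightarrow>
        (\<exists>y \<in> Y - X. indep (insert y X)))"

definition mrank :: "('a set \<Rightarrow> bool) \<Rightarrow> 'a set \<Rightarrow> nat" where
  "mrank indep X = Max {card Y | Y. Y \<subseteq> X \<and> indep Y}"

definition circuit :: "'a set \<Rightarrow> ('a set \<Rightarrow> bool) \<Rightarrow> 'a set \<Rightarrow> bool" where
  "circuit E indep C \<longleftrightarrow> C \<subseteq> E \<and> \<not> indep C \<and> (\<forall>D. D \<subset> C \<longrightarrow> indep D)"

text \<open>Every non-root vertex v has the edge from v to its parent; every vertex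
reaches the root by iterating the parent map, so this is exactly a rooted tree
whose edges correspond to the non-root vertices.\<close>

definition rooted_tree :: "'v set \<Rightarrow> 'v \<Rightarrow> ('v \<Rightarrow> 'v) \<Rightarrow> bool" where
  "rooted_tree V rt par \<longleftrightarrow>
     finite V \<and> rt \<in> V \<and>
     (\<forall>v \<in> V - {rt}. par v \<in> V) \<and>
     (\<forall>v \<in> V. \<exists>n. (par ^^ n) v = rt)"

definition tdist :: "'v \<Rightarrow> ('v \<Rightarrow> 'v) \<Rightarrow> 'v \<Rightarrow> nat" where
  "tdist rt par v = (LEAST n. (par ^^ n) v = rt)"

definition tedges :: "'v set \<Rightarrow> nat" where
  "tedges V = card V - 1"

definition tdepth :: "'v set \<Rightarrow> 'v \<Rightarrow> ('v \<Rightarrow> 'v) \<Rightarrow> nat" where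
  "tdepth V rt par = Max (tdist rt par ` V)"

text \<open>Edges of the path from the root to v, identified with the non-root vertices on it.\<close>
definition path_edges :: "'v \<Rightarrow> ('v \<Rightarrow> 'v) \<Rightarrow> 'v \<Rightarrow> 'v set" where
  "path_edges rt par v = {(par ^^ k) v | k. k < tdist rt par v}"

definition tstar_edges :: "'v \<Rightarrow> ('v \<Rightarrow> 'v) \<Rightarrow> 'v set \<Rightarrow> nat" where
  "tstar_edges rt par S = card (\<Union>v \<in> S. path_edges rt par v)"

definition depth_decomposition ::
  "'a set \<Rightarrow> ('a set \<Rightarrow> bool) \<Rightarrow> 'v set \<Rightarrow> 'v \<Rightarrow> ('v \<Rightarrow> 'v) \<Rightarrow> ('a \<Rightarrow> 'v) \<Rightarrow> bool" where
  "depth_decomposition E indep V rt par f \<longleftrightarrow>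
     rooted_tree V rt par \<and>
     (\<forall>x \<in> E. f x \<in> V) \<and>
     mrank indep E = tedges V \<and>
     (\<forall>X. X \<subseteq> E \<longrightarrow> mrank indep X \<le> tstar_edges rt par (f ` X))"

text \<open>Trees are finite, so taking vertices in nat loses no generality.\<close>
definition branch_depth :: "'a set \<Rightarrow> ('a set \<Rightarrow> bool) \<Rightarrow> nat" where
  "branch_depth E indep =
     (LEAST k. \<exists>(V :: nat set) rt par f.
         depth_decomposition E indep V rt par f \<and> tdepth V rt par = k)"

end

theory Submission
  imports Defs
begin


context fixes E :: "'a set" and indep assumes M: "matroid E indep" begin

lemma indep_sub: "indep X \<Longrightarrow> X \<subseteq> E" using M unfolding matroid_def by blast
lemma finE: "finite E" using M unfolding matroid_def by blast
lemma indep_empty: "indep {}" using M unfolding matroid_def by blast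
lemma indep_subset: "indep X \<Longrightarrow> Y \<subseteq> X \<Longrightarrow> indep Y" using M unfolding matroid_def by blast
lemma augment: "indep X \<Longrightarrow> indep Y \<Longrightarrow> card X < card Y \<Longrightarrow> \<exists>y\<in>Y-X. indep (insert y X)"
  using M unfolding matroid_def by blast
lemma indep_fin: "indep X \<Longrightarrow> finite X" using indep_sub finE finite_subset by blast

lemma rk_fin: "finite {card Y | Y. Y \<subseteq> X \<and> indep Y}"
proof -
  have "{card Y | Y. Y \<subseteq> X \<and> indep Y} \<subseteq> card ` Pow E" using indep_sub by blast
  then show ?thesis using finE by (meson finite_Pow_iff finite_imageI finite_subset)
qed

lemma rk_ge: "Y \<subseteq> X \<Longrightarrow> indep Y \<Longrightarrow> card Y \<le> mrank indep X"
  unfolding mrank_def by (rule Max_ge[OF rk_fin]) blast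

lemma rk_ex: "\<exists>Y. Y \<subseteq> X \<and> indep Y \<and> card Y = mrank indep X"
proof -
  have "{card Y | Y. Y \<subseteq> X \<and> indep Y} \<noteq> {}" using indep_empty by blast
  from Max_in[OF rk_fin this] show ?thesis unfolding mrank_def by auto
qed

lemma rk_indep: "indep X \<Longrightarrow> mrank indep X = card X"
proof -
  assume X: "indep X"
  obtain Y where "Y \<subseteq> X" "card Y = mrank indep X" using rk_ex by blast
  then have "mrank indep X \<le> card X" using card_mono indep_fin[OF X] by metis
  moreover have "card X \<le> mrank indep X" using rk_ge[OF _ X] by blast
  ultimately show ?thesis by simp
qed

lemma rk_mono: "X \<subseteq> Y \<Longrightarrow> mrank indep X \<le> mrank indep Y"
  using rk_ex[of X] rk_ge[of _ Y] by (metis order_trans)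

lemma rk_insert: "mrank indep (insert e X) \<le> mrank indep X + 1"
proof -
  obtain Y where Y: "Y \<subseteq> insert e X" "indep Y" "card Y = mrank indep (insert e X)" using rk_ex by blast
  have "Y - {e} \<subseteq> X" using Y by blast
  moreover have "indep (Y - {e})" using indep_subset Y by blast
  ultimately have "card (Y - {e}) \<le> mrank indep X" using rk_ge by blast
  moreover have "card Y \<le> card (Y - {e}) + 1" using indep_fin[OF Y(2)]
    by (metis card_Diff1_le card_Diff_singleton_if le_SucI le_add1 Suc_eq_plus1 card_Suc_Diff1 eq_imp_le)
  ultimately show ?thesis using Y by simp
qed

lemma rk_empty: "mrank indep {} = 0" using rk_indep[OF indep_empty] by simp

lemma rk_extend:
  assumes "indep I" "I \<subseteq> F"
  shows "\<exists>J. I \<subseteq> J \<and> J \<subseteq> F \<and> indep J \<and> card J = mrank indep F"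
  using assms
proof (induction "mrank indep F - card I" arbitrary: I rule: less_induct)
  case less
  have le: "card I \<le> mrank indep F" using rk_ge less.prems by blast
  show ?case
  proof (cases "card I = mrank indep F")
    case True then show ?thesis using less.prems by blast
  next
    case False
    obtain Y where Y: "Y \<subseteq> F" "indep Y" "card Y = mrank indep F" using rk_ex by blast
    then obtain y where y: "y \<in> Y - I" "indep (insert y I)" using augment[OF less.prems(1) Y(2)] le False by force
    have ci: "card (insert y I) = card I + 1" using y indep_fin[OF less.prems(1)] by simp
    have lt: "mrank indep F - card (insert y I) < mrank indep F - card I" using ci le False by simp
    have sub: "insert y I \<subseteq> F" using y Y less.prems by blast
    obtain J where "insert y I \<subseteq> J" "J \<subseteq> F" "indep J" "card J = mrank indep F"
      using less.hyps[OF lt y(2) sub] by blast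
    then show ?thesis by blast
  qed
qed

lemma coloop:
  assumes "X \<subseteq> F" "mrank indep (insert e F) = mrank indep F + 1"
  shows "mrank indep (insert e X) = mrank indep X + 1"
proof -
  obtain I where I: "I \<subseteq> X" "indep I" "card I = mrank indep X" using rk_ex by blast
  obtain J where J: "I \<subseteq> J" "J \<subseteq> F" "indep J" "card J = mrank indep F"
    using rk_extend[OF I(2) subset_trans[OF I(1) assms(1)]] by blast
  obtain Y where Y: "Y \<subseteq> insert e F" "indep Y" "card Y = mrank indep F + 1" using rk_ex[of "insert e F"] assms(2) by auto
  obtain y where y: "y \<in> Y - J" "indep (insert y J)" using augment[OF J(3) Y(2)] J Y by force
  have "y = e"
  proof (rule ccontr)
    assume "y \<noteq> e"
    then have "insert y J \<subseteq> F" using y Y J by blast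
    then have "card (insert y J) \<le> mrank indep F" using rk_ge y by blast
    moreover have "card (insert y J) = card J + 1" using y indep_fin[OF J(3)] by simp
    ultimately show False using J by simp
  qed
  then have ss: "insert e I \<subseteq> insert y J" using J(1) by blast
  have "indep (insert e I)" using indep_subset[OF y(2) ss] .
  moreover have "e \<notin> I" using \<open>y = e\<close> y J(1) by blast
  moreover have "insert e I \<subseteq> insert e X" using I(1) by blast
  ultimately have "card (insert e I) \<le> mrank indep (insert e X)" using rk_ge by blast
  moreover have "card (insert e I) = mrank indep X + 1" using \<open>e \<notin> I\<close> indep_fin[OF I(2)] I by simp
  ultimately show ?thesis using rk_insert[of e X] by simp
qed

end


context fixes V :: "'v set" and rt par assumes T: "rooted_tree V rt par" begin

lemma finV: "finite V" using T unfolding rooted_tree_def by blast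
lemma rtV: "rt \<in> V" using T unfolding rooted_tree_def by blast

lemma td1: "v \<in> V \<Longrightarrow> (par ^^ tdist rt par v) v = rt"
  unfolding tdist_def using T unfolding rooted_tree_def by (meson LeastI_ex)
lemma td2: "i < tdist rt par v \<Longrightarrow> (par ^^ i) v \<noteq> rt"
  unfolding tdist_def using not_less_Least by blast
lemma td3: "(par ^^ i) v = rt \<Longrightarrow> tdist rt par v \<le> i"
  unfolding tdist_def by (rule Least_le)

lemma tdV: "v \<in> V \<Longrightarrow> i \<le> tdist rt par v \<Longrightarrow> (par ^^ i) v \<in> V"
proof (induction i)
  case 0 then show ?case by simp
next
  case (Suc i)
  then have "(par ^^ i) v \<in> V" "(par ^^ i) v \<noteq> rt" using td2[of i v] by auto
  then show ?case using T unfolding rooted_tree_def by auto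
qed

lemma td_iter: "v \<in> V \<Longrightarrow> i \<le> tdist rt par v \<Longrightarrow> tdist rt par ((par ^^ i) v) = tdist rt par v - i"
proof -
  assume v: "v \<in> V" and i: "i \<le> tdist rt par v"
  have "(par ^^ (tdist rt par v - i)) ((par ^^ i) v) = (par ^^ (tdist rt par v - i + i)) v"
    by (simp add: funpow_add)
  also have "\<dots> = rt" using i td1[OF v] by simp
  finally have a: "tdist rt par ((par ^^ i) v) \<le> tdist rt par v - i" by (rule td3)
  have "(par ^^ (tdist rt par ((par ^^ i) v) + i)) v = (par ^^ (tdist rt par ((par ^^ i) v))) ((par ^^ i) v)"
    by (simp add: funpow_add)
  also have "\<dots> = rt" using td1 tdV[OF v i] by blast
  finally have "tdist rt par v \<le> tdist rt par ((par ^^ i) v) + i" by (rule td3)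
  with a show ?thesis by simp
qed

lemma path_char: "u \<in> path_edges rt par v \<longleftrightarrow> (\<exists>i < tdist rt par v. u = (par ^^ i) v)"
  unfolding path_edges_def by blast

lemma path_in: "v \<in> V \<Longrightarrow> u \<in> path_edges rt par v \<Longrightarrow> u \<in> V \<and> u \<noteq> rt"
  using tdV td2 unfolding path_char by (metis less_imp_le)

lemma path_trans: "v \<in> V \<Longrightarrow> u \<in> path_edges rt par v \<Longrightarrow> path_edges rt par u \<subseteq> path_edges rt par v"
proof
  fix w assume v: "v \<in> V" and u: "u \<in> path_edges rt par v" and w: "w \<in> path_edges rt par u"
  obtain i where i: "i < tdist rt par v" "u = (par ^^ i) v" using u path_char by blast
  obtain j where j: "j < tdist rt par u" "w = (par ^^ j) u" using w path_char by blast
  have "tdist rt par u = tdist rt par v - i" using td_iter v i by simp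
  then have "j + i < tdist rt par v" "w = (par ^^ (j + i)) v" using i j by (auto simp: funpow_add)
  then show "w \<in> path_edges rt par v" using path_char by blast
qed

lemma path_self: "v \<in> V \<Longrightarrow> v \<noteq> rt \<Longrightarrow> v \<in> path_edges rt par v"
proof -
  assume "v \<in> V" "v \<noteq> rt"
  then have "tdist rt par v \<noteq> 0" using td1[of v] by (metis funpow_0)
  then show ?thesis using path_char[of v v] by (metis funpow_0 neq0_conv)
qed

lemma path_td_le: "v \<in> V \<Longrightarrow> u \<in> path_edges rt par v \<Longrightarrow> tdist rt par u \<le> tdist rt par v"
  using td_iter path_char by (metis diff_le_self less_imp_le)

lemma path_td_lt: "v \<in> V \<Longrightarrow> u \<in> path_edges rt par v \<Longrightarrow> u \<noteq> v \<Longrightarrow> tdist rt par u < tdist rt par v"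
proof -
  assume v: "v \<in> V" and u: "u \<in> path_edges rt par v" and ne: "u \<noteq> v"
  obtain i where i: "i < tdist rt par v" "u = (par ^^ i) v" using u path_char by blast
  then have "i \<noteq> 0" using ne by (metis funpow_0)
  then show ?thesis using td_iter[OF v] i by simp
qed

lemma path_total: "v \<in> V \<Longrightarrow> u \<in> path_edges rt par v \<Longrightarrow> u' \<in> path_edges rt par v \<Longrightarrow>
   tdist rt par u \<le> tdist rt par u' \<Longrightarrow> u = u' \<or> u \<in> path_edges rt par u'"
proof -
  assume v: "v \<in> V" and u: "u \<in> path_edges rt par v" and u': "u' \<in> path_edges rt par v"
    and le: "tdist rt par u \<le> tdist rt par u'"
  obtain i where i: "i < tdist rt par v" "u = (par ^^ i) v" using u path_char by blast
  obtain j where j: "j < tdist rt par v" "u' = (par ^^ j) v" using u' path_char by blast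
  have "tdist rt par u = tdist rt par v - i" "tdist rt par u' = tdist rt par v - j" using td_iter v i j by auto
  then have ji: "j \<le> i" using le i j by simp
  show ?thesis
  proof (cases "i = j")
    case True then show ?thesis using i j by simp
  next
    case False
    have "(par ^^ i) v = (par ^^ (i - j)) ((par ^^ j) v)" using ji
      by (metis funpow_add le_add_diff_inverse2 o_apply)
    then have "u = (par ^^ (i - j)) u'" using i j by simp
    moreover have "i - j < tdist rt par u'" using \<open>tdist rt par u' = tdist rt par v - j\<close> i ji by simp
    ultimately show ?thesis using path_char by blast
  qed
qed

lemma path_fin: "finite (path_edges rt par v)" and path_card: "card (path_edges rt par v) \<le> tdist rt par v"
proof -
  have e: "path_edges rt par v = (\<lambda>k. (par ^^ k) v) ` {..<tdist rt par v}" unfolding path_edges_def by auto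
  show "finite (path_edges rt par v)" unfolding e by simp
  show "card (path_edges rt par v) \<le> tdist rt par v" unfolding e using card_image_le by fastforce
qed

lemma td_depth: "v \<in> V \<Longrightarrow> tdist rt par v \<le> tdepth V rt par"
  unfolding tdepth_def using finV by simp

end


lemma swap_count:
  fixes g :: "'b \<Rightarrow> real"
  assumes "finite A" "finite W" "\<And>a. a \<in> A \<Longrightarrow> Q a \<subseteq> W"
  shows "(\<Sum>a\<in>A. \<Sum>u\<in>Q a. g u) = (\<Sum>u\<in>W. real (card {a\<in>A. u \<in> Q a}) * g u)"
proof -
  have "(\<Sum>a\<in>A. \<Sum>u\<in>Q a. g u) = (\<Sum>a\<in>A. \<Sum>u\<in>W. if u \<in> Q a then g u else 0)"
  proof (rule sum.cong)
    fix a assume a: "a \<in> A"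
    have "(\<Sum>u\<in>W. if u \<in> Q a then g u else 0) = sum g (W \<inter> Q a)"
      using sum.inter_restrict[OF assms(2)] by metis
    also have "W \<inter> Q a = Q a" using assms(3)[OF a] by blast
    finally show "(\<Sum>u\<in>Q a. g u) = (\<Sum>u\<in>W. if u \<in> Q a then g u else 0)" by simp
  qed simp
  also have "\<dots> = (\<Sum>u\<in>W. \<Sum>a\<in>A. if u \<in> Q a then g u else 0)" by (rule sum.swap)
  also have "\<dots> = (\<Sum>u\<in>W. real (card {a\<in>A. u \<in> Q a}) * g u)"
  proof (rule sum.cong)
    fix u
    have "(\<Sum>a\<in>A. if u \<in> Q a then g u else 0) = (\<Sum>a\<in>{a\<in>A. u \<in> Q a}. g u)"
      using sum.inter_filter[OF assms(1), of "\<lambda>_. g u" "\<lambda>a. u \<in> Q a"] by simp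
    then show "(\<Sum>a\<in>A. if u \<in> Q a then g u else 0) = real (card {a\<in>A. u \<in> Q a}) * g u" by simp
  qed simp
  finally show ?thesis .
qed

lemma geom: "(\<Sum>j\<in>{1..m}. (1/2::real) ^ j) = 1 - (1/2) ^ m"
proof (induction m)
  case 0 then show ?case by simp
next
  case (Suc m)
  have "{1..Suc m} = insert (Suc m) {1..m}" by auto
  then have "(\<Sum>j\<in>{1..Suc m}. (1/2::real) ^ j) = (1/2)^Suc m + (\<Sum>j\<in>{1..m}. (1/2::real) ^ j)" by simp
  then show ?case using Suc by simp
qed

context fixes E :: "'a set" and indep V and rt :: 'v and par f
  assumes M: "matroid E indep" and D: "depth_decomposition E indep V rt par f"
begin

lemma T: "rooted_tree V rt par" using D unfolding depth_decomposition_def by blast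
lemma fV: "x \<in> E \<Longrightarrow> f x \<in> V" using D unfolding depth_decomposition_def by blast

lemma Ufin: "X \<subseteq> E \<Longrightarrow> (\<Union>x\<in>X. path_edges rt par (f x)) \<subseteq> V - {rt}"
  using path_in[OF T] fV by blast

lemma reduce: "F \<subseteq> E \<Longrightarrow> \<exists>K. K \<subseteq> V - {rt} \<and> card (V - {rt} - K) = mrank indep F \<and>
   (\<forall>X\<subseteq>F. mrank indep X \<le> card ((\<Union>x\<in>X. path_edges rt par (f x)) - K))"
proof (induction "card (E - F)" arbitrary: F)
  case 0
  then have "E - F = {}" using finE[OF M] by simp
  then have FE: "F = E" using 0 by blast
  have c0: "card (V - {rt} - {}) = mrank indep F"
    using D rtV[OF T] finV[OF T] FE unfolding depth_decomposition_def tedges_def by simp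
  have c1: "\<forall>X\<subseteq>F. mrank indep X \<le> card ((\<Union>x\<in>X. path_edges rt par (f x)) - {})"
  proof (intro allI impI)
    fix X assume "X \<subseteq> F"
    then have "mrank indep X \<le> tstar_edges rt par (f ` X)" using D FE unfolding depth_decomposition_def by blast
    then show "mrank indep X \<le> card ((\<Union>x\<in>X. path_edges rt par (f x)) - {})"
      unfolding tstar_edges_def by simp
  qed
  have c2: "{} \<subseteq> V - {rt}" by simp
  show ?case using c0 c1 c2 by (intro exI[of _ "{}"]) blast
next
  case (Suc m)
  then have "E - F \<noteq> {}" by (metis card.empty nat.distinct(1))
  then obtain e where e: "e \<in> E" "e \<notin> F" by blast
  define F' where "F' = insert e F"
  have "E - F' = (E - F) - {e}" unfolding F'_def by blast
  then have "m = card (E - F')" using Suc.hyps(2) e by simp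
  moreover have F'E: "F' \<subseteq> E" using e Suc.prems unfolding F'_def by blast
  ultimately have "\<exists>K. K \<subseteq> V - {rt} \<and> card (V - {rt} - K) = mrank indep F' \<and>
   (\<forall>X\<subseteq>F'. mrank indep X \<le> card ((\<Union>x\<in>X. path_edges rt par (f x)) - K))" by (rule Suc.hyps(1))
  then obtain K where K: "K \<subseteq> V - {rt}" "card (V - {rt} - K) = mrank indep F'"
    "\<forall>X\<subseteq>F'. mrank indep X \<le> card ((\<Union>x\<in>X. path_edges rt par (f x)) - K)"
    by blast
  have FF': "F \<subseteq> F'" unfolding F'_def by blast
  show ?case
  proof (cases "mrank indep F' = mrank indep F")
    case True
    have "\<forall>X\<subseteq>F. mrank indep X \<le> card ((\<Union>x\<in>X. path_edges rt par (f x)) - K)"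
      using K(3) FF' by blast
    then show ?thesis using K(1,2) True by (intro exI[of _ K]) simp
  next
    case False
    have rF': "mrank indep (insert e F) = mrank indep F + 1"
      using False rk_mono[OF M FF'] rk_insert[OF M, of e F] unfolding F'_def by simp
    have r1: "mrank indep {e} = 1" using coloop[OF M _ rF', of "{}"] rk_empty[OF M] by simp
    define S where "S = path_edges rt par (f e) - K"
    have feV: "f e \<in> V" using fV e by blast
    have "{e} \<subseteq> F'" unfolding F'_def by blast
    then have "mrank indep {e} \<le> card ((\<Union>x\<in>{e}. path_edges rt par (f x)) - K)" using K(3) by blast
    then have "1 \<le> card S" using r1 unfolding S_def by simp
    then have Sne: "S \<noteq> {}" and Sfin: "finite S" by (auto intro: card_ge_0_finite)
    have "Max (tdist rt par ` S) \<in> tdist rt par ` S" using Sne Sfin by simp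
    then have "\<exists>w. w \<in> S \<and> tdist rt par w = Max (tdist rt par ` S)" by (metis imageE)
    then obtain w where w: "w \<in> S" "tdist rt par w = Max (tdist rt par ` S)" by blast
    have wmax: "\<forall>v\<in>S. tdist rt par v \<le> tdist rt par w" using w Sfin by simp
    have wV: "w \<in> V - {rt}" "w \<notin> K" using w path_in[OF T feV] unfolding S_def by auto
    define K' where "K' = insert w K"
    have "card (V - {rt} - K') = card (V - {rt} - K) - 1"
      unfolding K'_def using wV finV[OF T] by (metis Diff_insert card_Diff_singleton finite_Diff DiffI)
    then have c': "card (V - {rt} - K') = mrank indep F" using K(2) rF' unfolding F'_def by simp
    have "\<forall>X\<subseteq>F. mrank indep X \<le> card ((\<Union>x\<in>X. path_edges rt par (f x)) - K')"
    proof (intro allI impI)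
      fix X assume XF: "X \<subseteq> F"
      define U where "U = (\<Union>x\<in>X. path_edges rt par (f x))"
      have XE: "X \<subseteq> E" using XF Suc.prems by blast
      have finU: "finite (U - K)" using Ufin[OF XE] finV[OF T] unfolding U_def
        by (meson finite_Diff finite_subset subset_Diff_insert)
      show "mrank indep X \<le> card (U - K')"
      proof (cases "w \<in> U")
        case False
        then have "U - K' = U - K" unfolding K'_def by blast
        then show ?thesis using K(3) XF FF' unfolding U_def by auto
      next
        case True
        then obtain x where x: "x \<in> X" "w \<in> path_edges rt par (f x)" unfolding U_def by blast
        have fxV: "f x \<in> V" using fV XE x by blast
        have wP: "w \<in> path_edges rt par (f e)" using w unfolding S_def by blast
        have SP: "S \<subseteq> path_edges rt par (f x)"
        proof
          fix v assume v: "v \<in> S"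
          then have "v \<in> path_edges rt par (f e)" unfolding S_def by blast
          then have "v = w \<or> v \<in> path_edges rt par w" using path_total[OF T feV _ wP] wmax v by blast
          then show "v \<in> path_edges rt par (f x)" using path_trans[OF T fxV x(2)] x(2) by blast
        qed
        have sub: "(\<Union>x\<in>insert e X. path_edges rt par (f x)) - K \<subseteq> U - K"
          using SP x unfolding U_def S_def by blast
        have "insert e X \<subseteq> F'" using XF unfolding F'_def by blast
        then have "mrank indep (insert e X) \<le> card ((\<Union>x\<in>insert e X. path_edges rt par (f x)) - K)"
          using K(3) by blast
        also have "\<dots> \<le> card (U - K)" using card_mono[OF finU sub] .
        finally have a: "mrank indep X + 1 \<le> card (U - K)" using coloop[OF M XF rF'] by simp
        have "U - K' = (U - K) - {w}" unfolding K'_def by blast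
        then have "card (U - K') = card (U - K) - 1" using True wV by simp
        then show ?thesis using a by simp
      qed
    qed
    moreover have "K' \<subseteq> V - {rt}" using K(1) wV unfolding K'_def by blast
    ultimately show ?thesis using c' by (intro exI[of _ K']) simp
  qed
qed

end


context fixes E :: "'a set" and indep V and rt :: 'v and par f
  assumes M: "matroid E indep" and D: "depth_decomposition E indep V rt par f"
begin

lemma kraft:
  assumes C: "circuit E indep C" and K: "K \<subseteq> V - {rt}" and cK: "card (V - {rt} - K) = mrank indep C"
    and KX: "\<forall>X\<subseteq>C. mrank indep X \<le> card ((\<Union>x\<in>X. path_edges rt par (f x)) - K)"
  shows "card C \<le> 2 ^ tdepth V rt par"
proof -
  define W where "W = V - {rt} - K"
  define P where "P = (\<lambda>v. path_edges rt par v - K)"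
  define d where "d = (\<lambda>v. card (P v))"
  define n where "n = card C"
  define q :: real where "q = 1/2"
  define k where "k = tdepth V rt par"
  have TT: "rooted_tree V rt par" using T[OF M D] .
  have CE: "C \<subseteq> E" and ni: "\<not> indep C" and sub: "\<And>D. D \<subset> C \<Longrightarrow> indep D"
    using C unfolding circuit_def by auto
  have finC: "finite C" using CE finE[OF M] finite_subset by blast
  have Cne: "C \<noteq> {}" using ni indep_empty[OF M] by blast
  then have n1: "n \<ge> 1" using finC unfolding n_def by (simp add: Suc_leI card_gt_0_iff)
  obtain x0 where x0: "x0 \<in> C" using Cne by blast
  have "indep (C - {x0})" using sub x0 by blast
  then have "card (C - {x0}) \<le> mrank indep C" using rk_ge[OF M] by blast
  then have rC1: "n - 1 \<le> mrank indep C" using x0 finC unfolding n_def by simp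
  obtain Y where Y: "Y \<subseteq> C" "indep Y" "card Y = mrank indep C" using rk_ex[OF M] by blast
  have "Y \<noteq> C" using Y ni by blast
  then have "card Y < n" using Y finC psubset_card_mono unfolding n_def by blast
  then have rC: "mrank indep C = n - 1" using rC1 Y by simp
  have cW: "card W = n - 1" using cK rC unfolding W_def by simp
  have finV': "finite V" using finV[OF TT] .
  have finW: "finite W" using finV' unfolding W_def by simp
  have fV': "\<And>x. x \<in> C \<Longrightarrow> f x \<in> V" using fV[OF M D] CE by blast
  have PW: "\<And>v. v \<in> V \<Longrightarrow> P v \<subseteq> W" using path_in[OF TT] unfolding P_def W_def by blast
  have finP: "\<And>v. finite (P v)" using path_fin[OF TT] unfolding P_def by simp
  define U where "U = (\<Union>x\<in>C. path_edges rt par (f x)) - K"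
  have UW1: "U \<subseteq> W" using Ufin[OF M D CE] unfolding U_def W_def by blast
  have "mrank indep C \<le> card U" using KX unfolding U_def by blast
  then have "card W \<le> card U" using rC cW by simp
  then have "card U = card W" using card_mono[OF finW UW1] by (rule antisym[rotated])
  then have UW: "U = W" by (rule card_subset_eq[OF finW UW1])
  have selfP: "\<And>u. u \<in> W \<Longrightarrow> u \<in> P u" using path_self[OF TT] unfolding W_def P_def by blast
  have Pmono: "\<And>u v. v \<in> V \<Longrightarrow> u \<in> P v \<Longrightarrow> P u \<subseteq> P v"
    using path_trans[OF TT] unfolding P_def by blast
  have dlt: "d u < d u'" if v: "v \<in> V" and u: "u \<in> P v" and u': "u' \<in> P v"
    and le: "tdist rt par u \<le> tdist rt par u'" and ne: "u \<noteq> u'" for v u u'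
  proof -
    have up: "u \<in> path_edges rt par u'" using path_total[OF TT v _ _ le] u u' ne unfolding P_def by blast
    have u'W: "u' \<in> W" using PW[OF v] u' by blast
    have uW: "u \<in> W" using PW[OF v] u by blast
    have u'V: "u' \<in> V" "u \<in> V" using u'W uW unfolding W_def by auto
    have uP: "u \<in> P u'" using up uW unfolding P_def W_def by blast
    have s1: "P u \<subseteq> P u'" using Pmono[OF u'V(1) uP] .
    have s2: "u' \<in> P u'" using selfP[OF u'W] .
    have s3: "u' \<notin> P u"
    proof
      assume "u' \<in> P u"
      then have "u' \<in> path_edges rt par u" unfolding P_def by blast
      then have "tdist rt par u' < tdist rt par u" using path_td_lt[OF TT u'V(2)] ne by blast
      moreover have "tdist rt par u < tdist rt par u'" using path_td_lt[OF TT u'V(1) up] ne by blast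
      ultimately show False by simp
    qed
    have "P u \<subset> P u'" using s1 s2 s3 by blast
    then show ?thesis unfolding d_def using psubset_card_mono[OF finP] by blast
  qed
  have S1: "(\<Sum>u\<in>P v. q ^ d u) = 1 - q ^ d v" if v: "v \<in> V" for v
  proof -
    have inj: "inj_on d (P v)"
    proof (rule inj_onI)
      fix u u' assume u: "u \<in> P v" and u': "u' \<in> P v" and eq: "d u = d u'"
      show "u = u'"
      proof (rule ccontr)
        assume ne: "u \<noteq> u'"
        show False
        proof (cases "tdist rt par u \<le> tdist rt par u'")
          case True then show False using dlt[OF v u u' True ne] eq by simp
        next
          case False then show False using dlt[OF v u' u _ ] ne eq by simp
        qed
      qed
    qed
    have im: "d ` P v \<subseteq> {1..d v}"
    proof
      fix j assume "j \<in> d ` P v"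
      then obtain u where u: "u \<in> P v" "j = d u" by blast
      have "u \<in> W" using PW[OF v] u by blast
      then have "1 \<le> d u" using selfP finP unfolding d_def by (metis One_nat_def Suc_leI card_gt_0_iff empty_iff)
      moreover have "d u \<le> d v" using Pmono[OF v u(1)] finP unfolding d_def by (simp add: card_mono)
      ultimately show "j \<in> {1..d v}" using u by simp
    qed
    have "card (d ` P v) = d v" using card_image[OF inj] unfolding d_def by simp
    then have im2: "d ` P v = {1..d v}" using card_subset_eq[OF _ im] by simp
    have "(\<Sum>u\<in>P v. q ^ d u) = (\<Sum>j\<in>d ` P v. q ^ j)" using sum.reindex[OF inj, of "\<lambda>j. q ^ j"] by simp
    also have "\<dots> = 1 - q ^ d v" unfolding im2 q_def by (rule geom)
    finally show ?thesis .
  qed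
  have S4: "card {y\<in>W. u \<in> P y} + 1 \<le> card {x\<in>C. u \<in> P (f x)}" if uW: "u \<in> W" for u
  proof -
    define A where "A = {x\<in>C. u \<in> P (f x)}"
    define Dd where "Dd = {x\<in>C. u \<notin> P (f x)}"
    define Ss where "Ss = {y\<in>W. u \<in> P y}"
    have "u \<in> U" using UW uW by simp
    then obtain x where "x \<in> C" "u \<in> P (f x)" unfolding U_def P_def by blast
    then have "Dd \<subset> C" unfolding Dd_def by blast
    then have "indep Dd" using sub by blast
    then have rD: "mrank indep Dd = card Dd" using rk_indep[OF M] by blast
    have DA: "Dd = C - A" unfolding Dd_def A_def by blast
    have AC: "A \<subseteq> C" unfolding A_def by blast
    have cD: "card Dd = n - card A" unfolding DA n_def
      using card_Diff_subset[OF finite_subset[OF AC finC] AC] .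
    have cA: "card A \<le> n" unfolding A_def n_def using finC by (simp add: card_mono)
    have "Dd \<subseteq> C" unfolding Dd_def by blast
    then have "mrank indep Dd \<le> card ((\<Union>x\<in>Dd. path_edges rt par (f x)) - K)" using KX by blast
    then have a: "card Dd \<le> card ((\<Union>x\<in>Dd. path_edges rt par (f x)) - K)" using rD by simp
    have "(\<Union>x\<in>Dd. path_edges rt par (f x)) - K \<subseteq> W - Ss"
    proof
      fix y assume "y \<in> (\<Union>x\<in>Dd. path_edges rt par (f x)) - K"
      then obtain x where x: "x \<in> Dd" "y \<in> P (f x)" unfolding P_def by blast
      have fx: "f x \<in> V" using fV' x(1) unfolding Dd_def by blast
      have yW: "y \<in> W" using PW[OF fx] x by blast
      have "y \<notin> Ss"
      proof
        assume "y \<in> Ss"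
        then have "u \<in> P y" unfolding Ss_def by blast
        then have "u \<in> P (f x)" using Pmono[OF fx x(2)] by blast
        then show False using x(1) unfolding Dd_def by blast
      qed
      then show "y \<in> W - Ss" using yW by blast
    qed
    then have "card ((\<Union>x\<in>Dd. path_edges rt par (f x)) - K) \<le> card (W - Ss)"
      using finW by (simp add: card_mono)
    also have "card (W - Ss) = card W - card Ss" using finW unfolding Ss_def
      by (simp add: card_Diff_subset finite_subset)
    finally have "n - card A \<le> n - 1 - card Ss" using a cD cW by simp
    moreover have "card Ss \<le> n - 1" using cW finW unfolding Ss_def by (metis (no_types, lifting) card_mono mem_Collect_eq subsetI)
    ultimately show ?thesis using cA n1 unfolding A_def Ss_def by linarith
  qed
  define c where "c = (\<lambda>u. real (card {x\<in>C. u \<in> P (f x)}))"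
  define s where "s = (\<lambda>u. real (card {y\<in>W. u \<in> P y}))"
  have A1: "(\<Sum>x\<in>C. q ^ d (f x)) = real n - (\<Sum>u\<in>W. c u * q ^ d u)"
  proof -
    have "(\<Sum>x\<in>C. q ^ d (f x)) = (\<Sum>x\<in>C. 1 - (\<Sum>u\<in>P (f x). q ^ d u))"
      using S1 fV' by simp
    also have "\<dots> = real n - (\<Sum>x\<in>C. \<Sum>u\<in>P (f x). q ^ d u)"
      by (simp add: sum_subtractf n_def)
    also have "(\<Sum>x\<in>C. \<Sum>u\<in>P (f x). q ^ d u) = (\<Sum>u\<in>W. c u * q ^ d u)"
      unfolding c_def using swap_count[OF finC finW, of "\<lambda>x. P (f x)" "\<lambda>u. q ^ d u"] PW fV' by blast
    finally show ?thesis .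
  qed
  have A2: "(\<Sum>u\<in>W. s u * q ^ d u) = (\<Sum>y\<in>W. 1 - q ^ d y)"
  proof -
    have "(\<Sum>u\<in>W. s u * q ^ d u) = (\<Sum>y\<in>W. \<Sum>u\<in>P y. q ^ d u)"
      unfolding s_def using swap_count[OF finW finW, of P "\<lambda>u. q ^ d u"] PW unfolding W_def by auto
    also have "\<dots> = (\<Sum>y\<in>W. 1 - q ^ d y)" using S1 unfolding W_def by simp
    finally show ?thesis .
  qed
  have "(\<Sum>u\<in>W. (1 + s u) * q ^ d u) \<le> (\<Sum>u\<in>W. c u * q ^ d u)"
  proof (rule sum_mono)
    fix u assume "u \<in> W"
    then have "1 + s u \<le> c u" using S4 unfolding s_def c_def by (metis add.commute of_nat_Suc of_nat_le_iff Suc_eq_plus1)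
    then show "(1 + s u) * q ^ d u \<le> c u * q ^ d u" unfolding q_def by (simp add: mult_right_mono)
  qed
  moreover have "(\<Sum>u\<in>W. (1 + s u) * q ^ d u) = real (card W)"
    using A2 by (simp add: distrib_right sum.distrib sum_subtractf)
  ultimately have sum1: "(\<Sum>x\<in>C. q ^ d (f x)) \<le> 1" using A1 cW n1 by (simp add: of_nat_diff)
  have "(\<Sum>x\<in>C. q ^ k) \<le> (\<Sum>x\<in>C. q ^ d (f x))"
  proof (rule sum_mono)
    fix x assume x: "x \<in> C"
    have "d (f x) \<le> card (path_edges rt par (f x))" unfolding d_def P_def
      using path_fin[OF TT] by (simp add: card_mono)
    also have "\<dots> \<le> tdist rt par (f x)" using path_card[OF TT] .
    also have "\<dots> \<le> k" unfolding k_def using td_depth[OF TT fV'[OF x]] .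
    finally show "q ^ k \<le> q ^ d (f x)" unfolding q_def by (rule power_decreasing) auto
  qed
  then have "real n * q ^ k \<le> 1" using sum1 unfolding n_def by simp
  then have "real n * q ^ k * 2 ^ k \<le> 2 ^ k" by simp
  then have "real n \<le> 2 ^ k" unfolding q_def by (simp add: power_one_over)
  then have "n \<le> 2 ^ k" by (metis of_nat_le_iff of_nat_numeral of_nat_power)
  then show ?thesis unfolding n_def k_def .
qed

end


lemma pw: "(((\<lambda>v::nat. v - 1)) ^^ n) v = v - n"
  by (induction n) auto

lemma pw': "(((\<lambda>v::nat. v - Suc 0)) ^^ n) v = v - n"
  using pw by simp

lemma td_nat: "tdist 0 (\<lambda>v::nat. v - 1) v = v"
  unfolding tdist_def by (rule Least_equality) (auto simp: pw')

lemma dd_exists: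
  assumes M: "matroid E indep"
  shows "\<exists>k (V::nat set) rt par f. depth_decomposition E indep V rt par f \<and> tdepth V rt par = k"
proof -
  define r where "r = mrank indep E"
  define V where "V = {0..r}"
  define par where "par = (\<lambda>v::nat. v - 1)"
  define f where "f = (\<lambda>x::'a. r)"
  have rt: "rooted_tree V 0 par" unfolding rooted_tree_def V_def par_def
    using pw by auto
  have pe: "path_edges 0 par r = {1..r}"
  proof -
    have "path_edges 0 par r = (\<lambda>k. r - k) ` {..<r}" unfolding path_edges_def par_def td_nat pw by auto
    also have "\<dots> = {1..r}"
    proof
      show "(\<lambda>k. r - k) ` {..<r} \<subseteq> {1..r}" by auto
      show "{1..r} \<subseteq> (\<lambda>k. r - k) ` {..<r}"
      proof
        fix x assume "x \<in> {1..r}"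
        then have "x = r - (r - x)" "r - x < r" by auto
        then show "x \<in> (\<lambda>k. r - k) ` {..<r}" by blast
      qed
    qed
    finally show ?thesis .
  qed
  have "\<forall>X. X \<subseteq> E \<longrightarrow> mrank indep X \<le> tstar_edges 0 par (f ` X)"
  proof (intro allI impI)
    fix X assume XE: "X \<subseteq> E"
    show "mrank indep X \<le> tstar_edges 0 par (f ` X)"
    proof (cases "X = {}")
      case True then show ?thesis using rk_empty[OF M] by simp
    next
      case False
      then have "f ` X = {r}" unfolding f_def by auto
      then have "tstar_edges 0 par (f ` X) = r" unfolding tstar_edges_def by (simp add: pe)
      then show ?thesis using rk_mono[OF M XE] unfolding r_def by simp
    qed
  qed
  moreover have "mrank indep E = tedges V" unfolding tedges_def V_def r_def by simp
  moreover have "\<forall>x\<in>E. f x \<in> V" unfolding f_def V_def by simp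
  ultimately have "depth_decomposition E indep V 0 par f" using rt unfolding depth_decomposition_def by blast
  then show ?thesis by blast
qed

theorem proposition3p4:
  fixes E :: "'a set" and indep :: "'a set \<Rightarrow> bool"
  assumes "matroid E indep"
    and "\<exists>C. circuit E indep C"
  shows "real (branch_depth E indep) \<ge> log 2 (Max (card ` {C. circuit E indep C}))"
proof -
  have M: "matroid E indep" using assms(1) .
  have "\<exists>(V :: nat set) rt par f. depth_decomposition E indep V rt par f \<and> tdepth V rt par = branch_depth E indep"
    unfolding branch_depth_def using dd_exists[OF M] by (rule LeastI_ex)
  then obtain V :: "nat set" and rt par f where D: "depth_decomposition E indep V rt par f"
    and dep: "tdepth V rt par = branch_depth E indep" by blast
  have bound: "card C \<le> 2 ^ branch_depth E indep" if C: "circuit E indep C" for C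
  proof -
    have CE: "C \<subseteq> E" using C unfolding circuit_def by blast
    obtain K where "K \<subseteq> V - {rt}" "card (V - {rt} - K) = mrank indep C"
      "\<forall>X\<subseteq>C. mrank indep X \<le> card ((\<Union>x\<in>X. path_edges rt par (f x)) - K)"
      using reduce[OF M D CE] by blast
    from kraft[OF M D C this] show ?thesis using dep by simp
  qed
  define S where "S = card ` {C. circuit E indep C}"
  have "{C. circuit E indep C} \<subseteq> Pow E" unfolding circuit_def by blast
  then have finS: "finite S" unfolding S_def using finE[OF M] by (meson finite_Pow_iff finite_imageI finite_subset)
  have Sne: "S \<noteq> {}" unfolding S_def using assms(2) by blast
  obtain C where C: "circuit E indep C" "Max S = card C" using Max_in[OF finS Sne] unfolding S_def by blast
  have "C \<noteq> {}" using C(1) indep_empty[OF M] unfolding circuit_def by blast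
  moreover have "finite C" using C(1) finE[OF M] finite_subset unfolding circuit_def by blast
  ultimately have pos: "0 < card C" by (simp add: card_gt_0_iff)
  have "real (card C) \<le> 2 ^ branch_depth E indep" using bound[OF C(1)]
    by (metis of_nat_le_iff of_nat_numeral of_nat_power)
  then have "log 2 (real (card C)) \<le> log 2 (2 ^ branch_depth E indep)"
    using pos by (subst log_le_cancel_iff) auto
  also have "\<dots> = real (branch_depth E indep)" by (simp add: log_nat_power)
  finally show ?thesis using C(2) unfolding S_def by simp
qed


end
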